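(* Let $t$ be a positive integer and let $G$ be a graph on $4t-1$ vertices with $\alpha(G)=2$ and $\mathrm{cm}(G)\le t-1$. Then for any triangle $v_1v_2v_3v_1$ in $G$, we have $\left|N(v_1)\cap N(v_2)\cap N(v_3)\right|\ge t+2$.
   Context: All graphs are finite and simple. $\alpha(G)$ is the independence number; $N(v)$ is the set of neighbours of $v$. A matching $M$ in $G$ is connected if for every two edges of $M$ there is an edge of $G$ joining an endpoint of one to an endpoint of the other; $\mathrm{cm}(G)$ is the maximum size of a connected matching in $G$. *)

theory Defs
  imports Main
begin

definition simple_graph :: "'a set \<Rightarrow> ('a \<Rightarrow> 'a \<Rightarrow> bool) \<Rightarrow> bool" where
  "simple_graph V E \<longleftrightarrow> finite V \<and> (\<forall>u v. E u v \<longrightarrow> u \<in> V \<and> v \<in> V)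
     \<and> (\<forall>u v. E u v \<longrightarrow> E v u) \<and> (\<forall>v. \<not> E v v)"

definition independent_set :: "'a set \<Rightarrow> ('a \<Rightarrow> 'a \<Rightarrow> bool) \<Rightarrow> 'a set \<Rightarrow> bool" where
  "independent_set V E S \<longleftrightarrow> S \<subseteq> V \<and> (\<forall>u\<in>S. \<forall>v\<in>S. \<not> E u v)"

definition alpha :: "'a set \<Rightarrow> ('a \<Rightarrow> 'a \<Rightarrow> bool) \<Rightarrow> nat" where
  "alpha V E = Max (card ` {S. independent_set V E S})"

definition neighbours :: "('a \<Rightarrow> 'a \<Rightarrow> bool) \<Rightarrow> 'a \<Rightarrow> 'a set" where
  "neighbours E v = {u. E v u}"

definition graph_edges :: "('a \<Rightarrow> 'a \<Rightarrow> bool) \<Rightarrow> 'a set set" where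
  "graph_edges E = {{u, v} | u v. E u v}"

definition matching :: "('a \<Rightarrow> 'a \<Rightarrow> bool) \<Rightarrow> 'a set set \<Rightarrow> bool" where
  "matching E M \<longleftrightarrow> M \<subseteq> graph_edges E \<and> (\<forall>e\<in>M. \<forall>f\<in>M. e \<noteq> f \<longrightarrow> e \<inter> f = {})"

definition connected_matching :: "('a \<Rightarrow> 'a \<Rightarrow> bool) \<Rightarrow> 'a set set \<Rightarrow> bool" where
  "connected_matching E M \<longleftrightarrow> matching E M \<and>
     (\<forall>e\<in>M. \<forall>f\<in>M. e \<noteq> f \<longrightarrow> (\<exists>x\<in>e. \<exists>y\<in>f. E x y))"

definition cm :: "'a set \<Rightarrow> ('a \<Rightarrow> 'a \<Rightarrow> bool) \<Rightarrow> nat" where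
  "cm V E = Max (card ` {M. connected_matching E M})"

end

theory Submission
  imports Defs
begin

lemma cm_ge:
  assumes "simple_graph V E" "connected_matching E M"
  shows "card M \<le> cm V E"
proof -
  have "{M. connected_matching E M} \<subseteq> Pow (Pow V)"
    using assms(1) by (auto simp: connected_matching_def matching_def graph_edges_def simple_graph_def)
  moreover have "finite V" using assms(1) by (simp add: simple_graph_def)
  ultimately have "finite {M. connected_matching E M}" by (meson finite_Pow_iff finite_subset)
  then show ?thesis unfolding cm_def using assms(2) by auto
qed

lemma CM1:
  assumes G: "simple_graph V E" and fin: "finite K"
    and cl: "\<forall>x\<in>K. \<forall>y\<in>K. x \<noteq> y \<longrightarrow> E x y"
    and inj: "inj_on f K" and fe: "\<forall>k\<in>K. E k (f k) \<and> f k \<notin> K"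
    and pq: "E p q" "p \<notin> K" "q \<notin> K" "p \<notin> f ` K" "q \<notin> f ` K"
    and pk: "\<forall>k\<in>K. E p k \<or> E p (f k)"
  shows "card K + 1 \<le> cm V E"
proof -
  have sym: "\<And>u v. E u v \<Longrightarrow> E v u" using G by (simp add: simple_graph_def)
  define M where "M = (\<lambda>k. {k, f k}) ` K \<union> {{p,q}}"
  have injM: "inj_on (\<lambda>k. {k, f k}) K"
    unfolding inj_on_def using fe by (metis doubleton_eq_iff)
  have notin: "{p,q} \<notin> (\<lambda>k. {k, f k}) ` K" using pq by auto
  have cardM: "card M = card K + 1"
    unfolding M_def using card_image[OF injM] notin fin by simp
  have "M \<subseteq> graph_edges E"
    unfolding M_def graph_edges_def using fe pq by blast
  moreover have "\<forall>e\<in>M. \<forall>g\<in>M. e \<noteq> g \<longrightarrow> e \<inter> g = {}"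
  proof (intro ballI impI)
    fix e g assume "e \<in> M" "g \<in> M" "e \<noteq> g"
    have fk: "\<And>k. k \<in> K \<Longrightarrow> f k \<notin> K" using fe by blast
    show "e \<inter> g = {}"
    proof (cases "e = {p,q}")
      case True
      then obtain k where "k \<in> K" "g = {k, f k}" using \<open>g \<in> M\<close> \<open>e \<noteq> g\<close> M_def by auto
      then show ?thesis using True pq by auto
    next
      case False
      then obtain k where k: "k \<in> K" "e = {k, f k}" using \<open>e \<in> M\<close> M_def by auto
      show ?thesis
      proof (cases "g = {p,q}")
        case True
        then show ?thesis using k pq by auto
      next
        case False
        then obtain k' where k': "k' \<in> K" "g = {k', f k'}" using \<open>g \<in> M\<close> M_def by auto
        then have "k \<noteq> k'" using k \<open>e \<noteq> g\<close> by auto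
        then have "f k \<noteq> f k'" using inj k k' by (meson inj_on_def)
        then show ?thesis using k k' fk \<open>k \<noteq> k'\<close> by auto
      qed
    qed
  qed
  moreover have "\<forall>e\<in>M. \<forall>g\<in>M. e \<noteq> g \<longrightarrow> (\<exists>x\<in>e. \<exists>y\<in>g. E x y)"
  proof (intro ballI impI)
    fix e g assume "e \<in> M" "g \<in> M" "e \<noteq> g"
    show "\<exists>x\<in>e. \<exists>y\<in>g. E x y"
    proof (cases "e = {p,q}")
      case True
      then obtain k where "k \<in> K" "g = {k, f k}" using \<open>g \<in> M\<close> \<open>e \<noteq> g\<close> M_def by auto
      then show ?thesis using True pk by auto
    next
      case False
      then obtain k where k: "k \<in> K" "e = {k, f k}" using \<open>e \<in> M\<close> M_def by auto
      show ?thesis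
      proof (cases "g = {p,q}")
        case True
        then show ?thesis using k pk sym by blast
      next
        case False
        then obtain k' where k': "k' \<in> K" "g = {k', f k'}" using \<open>g \<in> M\<close> M_def by auto
        then have "k \<noteq> k'" using k \<open>e \<noteq> g\<close> by auto
        then show ?thesis using k k' cl by blast
      qed
    qed
  qed
  ultimately have "connected_matching E M"
    unfolding connected_matching_def matching_def by blast
  then show ?thesis using cm_ge[OF G] cardM by metis
qed


lemma SDR:
  assumes "finite K" "\<forall>k\<in>K. finite (S k) \<and> card K \<le> card (S k)"
  shows "\<exists>f. inj_on f K \<and> (\<forall>k\<in>K. f k \<in> S k)"
  using assms
proof (induction K rule: finite_induct)
  case empty then show ?case by simp
next
  case (insert a K)
  then have "\<forall>k\<in>K. finite (S k) \<and> card K \<le> card (S k)" by auto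
  then obtain f where f: "inj_on f K" "\<forall>k\<in>K. f k \<in> S k" using insert.IH by blast
  have "card (f ` K) < card (S a)"
    using insert card_image_le[of K f] by force
  then obtain b where b: "b \<in> S a" "b \<notin> f ` K"
    by (meson card_mono finite_imageI insert.hyps(1) not_le subsetI)
  define g where "g = f(a := b)"
  have "inj_on g (insert a K)"
    unfolding g_def using f(1) b insert.hyps(2)
    by (smt (verit, ccfv_SIG) fun_upd_other fun_upd_same image_iff inj_on_def insertE)
  moreover have "\<forall>k\<in>insert a K. g k \<in> S k" unfolding g_def using f b insert.hyps(2) by auto
  ultimately show ?case by blast
qed

lemma CMt:
  assumes G: "simple_graph V E" and fin: "finite K" and cK: "card K = t" and t: "t \<ge> 1"
    and cl: "\<forall>x\<in>K. \<forall>y\<in>K. x \<noteq> y \<longrightarrow> E x y"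
    and inj: "inj_on f K" and fe: "\<forall>k\<in>K. E k (f k) \<and> f k \<notin> K"
  shows "t \<le> cm V E"
proof -
  obtain k0 where k0: "k0 \<in> K" using cK t by fastforce
  let ?K = "K - {k0}"
  have "card ?K + 1 \<le> cm V E"
  proof (rule CM1[OF G])
    show "finite ?K" using fin by simp
    show "\<forall>x\<in>?K. \<forall>y\<in>?K. x \<noteq> y \<longrightarrow> E x y" using cl by blast
    show "inj_on f ?K" using inj by (simp add: inj_on_diff)
    show "\<forall>k\<in>?K. E k (f k) \<and> f k \<notin> ?K" using fe by blast
    show "E k0 (f k0)" using fe k0 by blast
    show "k0 \<notin> ?K" by simp
    show "f k0 \<notin> ?K" using fe k0 by blast
    show "k0 \<notin> f ` ?K" using fe k0 by blast
    show "f k0 \<notin> f ` ?K" using inj k0 by (auto simp: inj_on_def)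
    show "\<forall>k\<in>?K. E k0 k \<or> E k0 (f k)" using cl k0 by auto
  qed
  moreover have "card ?K + 1 = t" using cK k0 fin t by simp
  ultimately show ?thesis by simp
qed


lemma indep_clique:
  assumes G: "simple_graph V E" and al: "alpha V E = 2"
    and "v \<in> V" "x \<in> V" "y \<in> V" "x \<noteq> y" "x \<noteq> v" "y \<noteq> v" "\<not> E v x" "\<not> E v y"
  shows "E x y"
proof (rule ccontr)
  assume nxy: "\<not> E x y"
  have sym: "\<And>u w. E u w \<Longrightarrow> E w u" and irr: "\<And>u. \<not> E u u"
    using G by (auto simp: simple_graph_def)
  have "independent_set V E {v,x,y}"
    unfolding independent_set_def using assms nxy sym irr by blast
  moreover have "card {v,x,y} = 3" using assms by auto
  moreover have "finite {S. independent_set V E S}"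
  proof -
    have "{S. independent_set V E S} \<subseteq> Pow V" by (auto simp: independent_set_def)
    moreover have "finite V" using G by (simp add: simple_graph_def)
    ultimately show ?thesis by (meson finite_Pow_iff finite_subset)
  qed
  ultimately have "3 \<le> alpha V E" unfolding alpha_def
    by (metis (mono_tags, lifting) Max_ge finite_imageI image_eqI mem_Collect_eq)
  then show False using al by simp
qed

lemma clique_bound:
  assumes G: "simple_graph V E" and al: "alpha V E = 2" and cV: "card V = 4 * t - 1"
    and cmt: "cm V E \<le> t - 1" and t: "t \<ge> 1"
    and KV: "K \<subseteq> V" and cl: "\<forall>x\<in>K. \<forall>y\<in>K. x \<noteq> y \<longrightarrow> E x y"
  shows "card K \<le> t - 1"
proof (rule ccontr)
  assume "\<not> card K \<le> t - 1"
  then have "t \<le> card K" by simp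
  then obtain K0 where K0: "K0 \<subseteq> K" "card K0 = t" by (meson obtain_subset_with_card_n)
  have finV: "finite V" using G by (simp add: simple_graph_def)
  have sym: "\<And>u w. E u w \<Longrightarrow> E w u" and irr: "\<And>u. \<not> E u u"
    using G by (auto simp: simple_graph_def)
  have finK0: "finite K0" using K0 KV finV by (meson finite_subset)
  define R where "R = V - K0"
  have K0V: "K0 \<subseteq> V" using K0 KV by blast
  have "card R = card V - card K0" unfolding R_def using card_Diff_subset[OF finK0 K0V] .
  then have cR: "card R = 3 * t - 1" using cV K0(2) t by linarith
  have finR: "finite R" unfolding R_def using finV by simp
  show False
  proof (cases "\<exists>k\<in>K0. card (R \<inter> neighbours E k) < t")
    case True
    then obtain k where k: "k \<in> K0" "card (R \<inter> neighbours E k) < t" by blast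
    define B where "B = R - neighbours E k"
    have "card R = card (R \<inter> neighbours E k) + card B"
      unfolding B_def using card_Int_Diff[OF finR] .
    then have cB: "2 * t \<le> card B" using k cR t by linarith
    have Bcl: "\<forall>x\<in>B. \<forall>y\<in>B. x \<noteq> y \<longrightarrow> E x y"
    proof (intro ballI impI)
      fix x y assume "x \<in> B" "y \<in> B" "x \<noteq> y"
      then have h: "x \<in> V" "y \<in> V" "x \<noteq> k" "y \<noteq> k" "\<not> E k x" "\<not> E k y"
        using k(1) unfolding B_def R_def neighbours_def by auto
      have "k \<in> V" using k(1) K0 KV by blast
      then show "E x y"
        using indep_clique[OF G al \<open>k \<in> V\<close> h(1,2) \<open>x \<noteq> y\<close> h(3-6)] by simp
    qed
    obtain B0 where B0: "B0 \<subseteq> B" "card B0 = 2 * t" using cB by (meson obtain_subset_with_card_n)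
    have "t \<le> card B0" using B0 by simp
    then obtain K1 where K1: "K1 \<subseteq> B0" "card K1 = t"
      by (meson obtain_subset_with_card_n)
    have finB0: "finite B0" using B0 finR unfolding B_def by (meson finite_Diff finite_subset)
    have finK1: "finite K1" using K1 finB0 finite_subset by blast
    have cR1: "card (B0 - K1) = t" using K1 B0 finK1 by (simp add: card_Diff_subset)
    obtain g where g: "bij_betw g K1 (B0 - K1)"
      using finite_same_card_bij[OF finK1 finite_Diff[OF finB0, of K1]] cR1 K1(2) by auto
    have "t \<le> cm V E"
    proof (rule CMt[OF G finK1 K1(2) t])
      show "\<forall>x\<in>K1. \<forall>y\<in>K1. x \<noteq> y \<longrightarrow> E x y" using Bcl K1 B0 by blast
      show "inj_on g K1" using g by (simp add: bij_betw_def)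
      show "\<forall>k\<in>K1. E k (g k) \<and> g k \<notin> K1"
      proof
        fix x assume x: "x \<in> K1"
        then have gx: "g x \<in> B0 - K1" using g by (meson bij_betwE)
        then have g1: "g x \<in> B" "g x \<notin> K1" using B0 by auto
        have "x \<in> B" using x K1 B0 by auto
        moreover have "x \<noteq> g x" using x g1 by auto
        ultimately have "E x (g x)" using Bcl g1 by blast
        then show "E x (g x) \<and> g x \<notin> K1" using g1 by simp
      qed
    qed
    then show False using cmt t by simp
  next
    case False
    have "\<forall>k\<in>K0. finite (R \<inter> neighbours E k) \<and> card K0 \<le> card (R \<inter> neighbours E k)"
    proof
      fix k assume "k \<in> K0"
      then have "\<not> card (R \<inter> neighbours E k) < t" using False by blast
      then show "finite (R \<inter> neighbours E k) \<and> card K0 \<le> card (R \<inter> neighbours E k)"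
        using finR K0(2) by simp
    qed
    from SDR[OF finK0 this] obtain f where f: "inj_on f K0" "\<forall>k\<in>K0. f k \<in> R \<inter> neighbours E k"
      by blast
    have "t \<le> cm V E"
    proof (rule CMt[OF G finK0 K0(2) t])
      show "\<forall>x\<in>K0. \<forall>y\<in>K0. x \<noteq> y \<longrightarrow> E x y" using cl K0 by blast
      show "inj_on f K0" by fact
      show "\<forall>k\<in>K0. E k (f k) \<and> f k \<notin> K0" using f(2) unfolding R_def neighbours_def by simp
    qed
    then show False using cmt t by simp
  qed
qed


lemma nonnb:
  assumes G: "simple_graph V E" and al: "alpha V E = 2" and cV: "card V = 4 * t - 1"
    and cmt: "cm V E \<le> t - 1" and t: "t \<ge> 1" and v: "v \<in> V"
  shows "card {x\<in>V. x \<noteq> v \<and> \<not> E v x} + 2 \<le> t"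
proof (rule ccontr)
  assume con: "\<not> ?thesis"
  define A where "A = {x\<in>V. x \<noteq> v \<and> \<not> E v x}"
  have finV: "finite V" using G by (simp add: simple_graph_def)
  have sym: "\<And>u w. E u w \<Longrightarrow> E w u" and irr: "\<And>u. \<not> E u u"
    and inV: "\<And>u w. E u w \<Longrightarrow> u \<in> V \<and> w \<in> V"
    using G by (auto simp: simple_graph_def)
  have AV: "A \<subseteq> V" unfolding A_def by blast
  have finA: "finite A" using AV finV finite_subset by blast
  have Acl: "\<forall>x\<in>A. \<forall>y\<in>A. x \<noteq> y \<longrightarrow> E x y"
  proof (intro ballI impI)
    fix x y assume "x \<in> A" "y \<in> A" "x \<noteq> y"
    then have h: "x \<in> V" "y \<in> V" "x \<noteq> v" "y \<noteq> v" "\<not> E v x" "\<not> E v y"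
      unfolding A_def by auto
    show "E x y" using indep_clique[OF G al v h(1,2) \<open>x \<noteq> y\<close> h(3-6)] by simp
  qed
  have cA1: "card A \<le> t - 1" using clique_bound[OF G al cV cmt t AV Acl] .
  then have cA: "card A = t - 1" using con unfolding A_def by linarith
  define N where "N = {x\<in>V. E v x}"
  have "V \<subseteq> {v} \<union> A \<union> N" unfolding A_def N_def by blast
  moreover have "finite ({v} \<union> A \<union> N)" using finV finA by (simp add: N_def)
  ultimately have c1: "card V \<le> card ({v} \<union> A \<union> N)" by (simp add: card_mono)
  have c2: "card ({v} \<union> A \<union> N) \<le> card ({v} \<union> A) + card N" by (rule card_Un_le)
  have c0: "card {v} = 1" by simp
  have c3: "card ({v} \<union> A) \<le> card {v} + card A" by (rule card_Un_le)
  have cN: "3 * t - 1 \<le> card N" using c1 c2 c3 cV cA t c0 by linarith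
  have NS: "\<forall>a\<in>A. finite (V \<inter> neighbours E a - A) \<and> card A \<le> card (V \<inter> neighbours E a - A)"
  proof
    fix a assume a: "a \<in> A"
    define Aa where "Aa = {x\<in>V. x \<noteq> a \<and> \<not> E a x}"
    have aV: "a \<in> V" using a AV by blast
    have AaV: "Aa \<subseteq> V" unfolding Aa_def by blast
    have Aacl: "\<forall>x\<in>Aa. \<forall>y\<in>Aa. x \<noteq> y \<longrightarrow> E x y"
    proof (intro ballI impI)
      fix x y assume "x \<in> Aa" "y \<in> Aa" "x \<noteq> y"
      then have h: "x \<in> V" "y \<in> V" "x \<noteq> a" "y \<noteq> a" "\<not> E a x" "\<not> E a y"
        unfolding Aa_def by auto
      show "E x y" using indep_clique[OF G al aV h(1,2) \<open>x \<noteq> y\<close> h(3-6)] by simp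
    qed
    have cAa: "card Aa \<le> t - 1" using clique_bound[OF G al cV cmt t AaV Aacl] .
    define Na where "Na = V \<inter> neighbours E a"
    have finAa: "finite Aa" using AaV finV finite_subset by blast
    have "V \<subseteq> {a} \<union> Aa \<union> Na" unfolding Aa_def Na_def neighbours_def by blast
    moreover have "finite ({a} \<union> Aa \<union> Na)" using finV finAa by (simp add: Na_def)
    ultimately have c1: "card V \<le> card ({a} \<union> Aa \<union> Na)" by (simp add: card_mono)
    have c2: "card ({a} \<union> Aa \<union> Na) \<le> card ({a} \<union> Aa) + card Na" by (rule card_Un_le)
    have c0: "card {a} = 1" by simp
    have c3: "card ({a} \<union> Aa) \<le> card {a} + card Aa" by (rule card_Un_le)
    have cNa: "3 * t - 1 \<le> card Na" using c1 c2 c3 cV cAa t c0 by linarith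
    have finNa: "finite Na" unfolding Na_def using finV by simp
    have "card Na - card A \<le> card (Na - A)" by (rule diff_card_le_card_Diff[OF finA])
    then have "card A \<le> card (Na - A)" using cNa cA t by linarith
    then show "finite (V \<inter> neighbours E a - A) \<and> card A \<le> card (V \<inter> neighbours E a - A)"
      using finNa unfolding Na_def by simp
  qed
  from SDR[OF finA NS] obtain f where f: "inj_on f A" "\<forall>a\<in>A. f a \<in> V \<inter> neighbours E a - A"
    by blast
  have fN: "\<forall>a\<in>A. f a \<in> N"
  proof
    fix a assume a: "a \<in> A"
    then have fa: "f a \<in> V" "E a (f a)" "f a \<notin> A" using f(2) unfolding neighbours_def by auto
    have "f a \<noteq> v"
    proof
      assume "f a = v"
      then have "E v a" using fa sym by simp
      then show False using a unfolding A_def by simp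
    qed
    then show "f a \<in> N" using fa unfolding A_def N_def by simp
  qed
  have "card (f ` A) < card N" using card_image_le[OF finA, of f] cA cN t by linarith
  have "\<not> N \<subseteq> f ` A"
  proof
    assume "N \<subseteq> f ` A"
    then have "card N \<le> card (f ` A)" using card_mono finite_imageI finA by blast
    then show False using \<open>card (f ` A) < card N\<close> by linarith
  qed
  then obtain y where y: "y \<in> N" "y \<notin> f ` A" by blast
  have "card A + 1 \<le> cm V E"
  proof (rule CM1[OF G finA Acl f(1)])
    show "\<forall>k\<in>A. E k (f k) \<and> f k \<notin> A" using f(2) unfolding neighbours_def by simp
    show "E v y" using y unfolding N_def by simp
    show "v \<notin> A" unfolding A_def by simp
    show "y \<notin> A" using y unfolding A_def N_def by simp
    show "v \<notin> f ` A" using fN irr unfolding N_def by auto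
    show "y \<notin> f ` A" by fact
    show "\<forall>k\<in>A. E v k \<or> E v (f k)" using fN unfolding N_def by simp
  qed
  then show False using cA cmt t by linarith
qed


theorem lemma2p2:
  fixes V :: "'a set" and E :: "'a \<Rightarrow> 'a \<Rightarrow> bool" and t :: nat
    and v1 v2 v3 :: 'a
  assumes "simple_graph V E"
    and "t \<ge> 1"
    and "card V = 4 * t - 1"
    and "alpha V E = 2"
    and "cm V E \<le> t - 1"
    and "E v1 v2" and "E v2 v3" and "E v3 v1"
  shows "card (neighbours E v1 \<inter> neighbours E v2 \<inter> neighbours E v3) \<ge> t + 2"
proof -
  note G = assms(1) and t = assms(2) and cV = assms(3) and al = assms(4) and cmt = assms(5)
  have finV: "finite V" using G by (simp add: simple_graph_def)
  have inV: "\<And>u w. E u w \<Longrightarrow> u \<in> V \<and> w \<in> V"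
    using G by (auto simp: simple_graph_def)
  have v1: "v1 \<in> V" and v2: "v2 \<in> V" and v3: "v3 \<in> V" using inV assms(6,7) by auto
  define A1 where "A1 = {x\<in>V. x \<noteq> v1 \<and> \<not> E v1 x}"
  define A2 where "A2 = {x\<in>V. x \<noteq> v2 \<and> \<not> E v2 x}"
  define A3 where "A3 = {x\<in>V. x \<noteq> v3 \<and> \<not> E v3 x}"
  have c1: "card A1 + 2 \<le> t" unfolding A1_def using nonnb[OF G al cV cmt t v1] .
  have c2: "card A2 + 2 \<le> t" unfolding A2_def using nonnb[OF G al cV cmt t v2] .
  have c3: "card A3 + 2 \<le> t" unfolding A3_def using nonnb[OF G al cV cmt t v3] .
  define X where "X = {v1, v2, v3} \<union> A1 \<union> A2 \<union> A3"
  have finX: "finite X" unfolding X_def A1_def A2_def A3_def using finV by simp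
  have "card X \<le> card ({v1, v2, v3} \<union> A1 \<union> A2) + card A3" unfolding X_def by (rule card_Un_le)
  moreover have "card ({v1, v2, v3} \<union> A1 \<union> A2) \<le> card ({v1, v2, v3} \<union> A1) + card A2" by (rule card_Un_le)
  moreover have "card ({v1, v2, v3} \<union> A1) \<le> card {v1, v2, v3} + card A1" by (rule card_Un_le)
  moreover have "card {v1, v2, v3} \<le> 3" by (simp add: card_insert_le_m1)
  ultimately have cX: "card X + 3 \<le> 3 * t" using c1 c2 c3 by linarith
  have sub: "V - X \<subseteq> neighbours E v1 \<inter> neighbours E v2 \<inter> neighbours E v3"
    unfolding X_def A1_def A2_def A3_def neighbours_def by auto
  have finI: "finite (neighbours E v1 \<inter> neighbours E v2 \<inter> neighbours E v3)"
  proof -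
    have "neighbours E v1 \<subseteq> V" unfolding neighbours_def using inV by blast
    then show ?thesis using finV by (meson finite_Int finite_subset)
  qed
  have "card V - card X \<le> card (V - X)" by (rule diff_card_le_card_Diff[OF finX])
  also have "\<dots> \<le> card (neighbours E v1 \<inter> neighbours E v2 \<inter> neighbours E v3)"
    by (rule card_mono[OF finI sub])
  finally show ?thesis using cV cX t by linarith
qed

end
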